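(* Let $K\subseteq V$ be a regular closed convex cone and $e\in\operatorname{int}(K)$. If $|||\cdot|||=\|\cdot\|_e$, then for all $L\in\mathrm{Gr}(V,m)$ $$\nu(L)=\min_{u\in\Delta(K^* )}\max_{x\in L,\|x\|\le1}\langle x,u\rangle=\max_{x\in L,\|x\|\le1}\min_{u\in\Delta(K^* )}\langle x,u\rangle=\max_{x\in L,\|x\|\le1}\lambda_e(x).$$
   Context: $V$ is a finite-dimensional real vector space with inner product $\langle\cdot,\cdot\rangle$; $K^*:=\{u:\langle u,x\rangle\ge0\ \forall x\in K\}$; $L^\perp$ is the orthogonal complement; $\mathrm{Gr}(V,m)$ is the set of $m$-dimensional subspaces ($1\le m<\dim V$). $\|\cdot\|$ is an arbitrary norm on $V$ with dual norm $\|u\|^*:=\max_{\|x\|=1}\langle u,x\rangle$. The norm induced by $(K,e)$ is $\|x\|_e:=\min\{\alpha\ge0: x+\alpha e\in K,\ -x+\alpha e\in K\}$, with dual norm $\|u\|_e^*:=\max_{\|x\|_e=1}\langle u,x\rangle$ (which equals $\langle u,e\rangle$ for $u\in K^*$). $\Delta(K^* ):=\{u\in K^*:\langle u,e\rangle=1\}$. The eigenvalue map is $\lambda_e(x):=\max\{t\in\mathbb R: x-te\in K\}$. With $|||\cdot|||$ a norm on $V$ with dual norm $|||\cdot|||^*$, $\nu(L):=\min\{\|y-u\|^*:u\in K^*,y\in L^\perp,|||u|||^*=1\}$. *)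

theory Defs
  imports "HOL-Analysis.Analysis"
begin

definition is_norm :: "('a::real_vector \<Rightarrow> real) \<Rightarrow> bool" where
  "is_norm N \<longleftrightarrow> (\<forall>x. N x = 0 \<longleftrightarrow> x = 0) \<and> (\<forall>c x. N (c *\<^sub>R x) = \<bar>c\<bar> * N x)
     \<and> (\<forall>x y. N (x + y) \<le> N x + N y)"

definition dual_norm :: "('a::real_inner \<Rightarrow> real) \<Rightarrow> 'a \<Rightarrow> real" where
  "dual_norm N u = Sup {u \<bullet> x | x. N x = 1}"

definition dual_cone :: "'a::real_inner set \<Rightarrow> 'a set" where
  "dual_cone K = {u. \<forall>x\<in>K. u \<bullet> x \<ge> 0}"

definition regular_closed_convex_cone :: "'a::euclidean_space set \<Rightarrow> bool" where
  "regular_closed_convex_cone K \<longleftrightarrow> closed K \<and> convex K \<and> cone K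
     \<and> K \<inter> uminus ` K = {0} \<and> interior K \<noteq> {}"

definition norm_e :: "'a::real_vector set \<Rightarrow> 'a \<Rightarrow> 'a \<Rightarrow> real" where
  "norm_e K e x = Inf {\<alpha>. \<alpha> \<ge> 0 \<and> x + \<alpha> *\<^sub>R e \<in> K \<and> - x + \<alpha> *\<^sub>R e \<in> K}"

definition simplex_dual :: "'a::real_inner set \<Rightarrow> 'a \<Rightarrow> 'a set" where
  "simplex_dual K e = {u \<in> dual_cone K. u \<bullet> e = 1}"

definition lambda_e :: "'a::real_vector set \<Rightarrow> 'a \<Rightarrow> 'a \<Rightarrow> real" where
  "lambda_e K e x = Sup {t. x - t *\<^sub>R e \<in> K}"

definition nu :: "('a::real_inner \<Rightarrow> real) \<Rightarrow> ('a \<Rightarrow> real) \<Rightarrow> 'a set \<Rightarrow> 'a set \<Rightarrow> real" where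
  "nu N M K L = Inf {dual_norm N (y - u) | u y.
      u \<in> dual_cone K \<and> y \<in> orthogonal_comp L \<and> dual_norm M u = 1}"

end

theory Submission
  imports Defs
begin

lemma nrm_basic:
  assumes "is_norm N"
  shows "N 0 = 0" "N (-x) = N x" "N x \<ge> 0" "N (c *\<^sub>R x) = \<bar>c\<bar> * N x" "N (x + y) \<le> N x + N y"
proof -
  show "N 0 = 0" using assms unfolding is_norm_def by auto
  show m: "N (-x) = N x" using assms unfolding is_norm_def by (metis abs_minus_cancel abs_one mult_1 scaleR_minus1_left)
  show "N (c *\<^sub>R x) = \<bar>c\<bar> * N x" "N (x + y) \<le> N x + N y" using assms unfolding is_norm_def by auto
  have "N (x + -x) \<le> N x + N (-x)" using assms unfolding is_norm_def by blast
  then show "N x \<ge> 0" using m \<open>N 0 = 0\<close> by simp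
qed

lemma nrm_sum:
  assumes "is_norm N" "finite S"
  shows "N (sum f S) \<le> (\<Sum>i\<in>S. N (f i))"
  using assms(2)
proof (induction S rule: finite_induct)
  case empty then show ?case using nrm_basic[OF assms(1)] by simp
next
  case (insert a S)
  then show ?case using nrm_basic(5)[OF assms(1), of "f a" "sum f S"] by simp
qed

lemma nrm_upper:
  fixes N :: "'a::euclidean_space \<Rightarrow> real"
  assumes "is_norm N"
  shows "\<exists>M\<ge>0. \<forall>x. N x \<le> M * norm x"
proof -
  define M where "M = (\<Sum>b\<in>Basis. N b)"
  have "M \<ge> 0" unfolding M_def by (intro sum_nonneg) (simp add: nrm_basic[OF assms])
  moreover have "N x \<le> M * norm x" for x
  proof -
    have "N x = N (\<Sum>b\<in>Basis. (x \<bullet> b) *\<^sub>R b)" by (simp add: euclidean_representation)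
    also have "\<dots> \<le> (\<Sum>b\<in>Basis. N ((x \<bullet> b) *\<^sub>R b))" by (rule nrm_sum[OF assms]) simp
    also have "\<dots> = (\<Sum>b\<in>Basis. \<bar>x \<bullet> b\<bar> * N b)" by (simp add: nrm_basic[OF assms])
    also have "\<dots> \<le> (\<Sum>b\<in>Basis. norm x * N b)"
      by (intro sum_mono mult_right_mono) (auto simp: nrm_basic[OF assms] Basis_le_norm)
    also have "\<dots> = M * norm x" by (simp add: M_def sum_distrib_left mult.commute)
    finally show ?thesis .
  qed
  ultimately show ?thesis by blast
qed

lemma nrm_lower:
  fixes N :: "'a::euclidean_space \<Rightarrow> real"
  assumes "is_norm N"
  shows "\<exists>R>0. \<forall>x. norm x \<le> R * N x"
proof -
  obtain M where M: "M \<ge> 0" "\<And>x. N x \<le> M * norm x" using nrm_upper[OF assms] by blast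
  have lip: "\<bar>N x - N y\<bar> \<le> M * norm (x - y)" for x y
  proof -
    have "N x \<le> N y + N (x - y)" using nrm_basic(5)[OF assms, of y "x - y"] by simp
    moreover have "N y \<le> N x + N (y - x)" using nrm_basic(5)[OF assms, of x "y - x"] by simp
    moreover have "N (y - x) = N (x - y)" using nrm_basic(2)[OF assms, of "x - y"] by simp
    ultimately show ?thesis using M(2)[of "x - y"] by linarith
  qed
  have cont: "continuous_on (sphere 0 1) N"
    unfolding continuous_on_iff
  proof (intro ballI allI impI)
    fix x and \<epsilon> :: real assume "\<epsilon> > 0"
    show "\<exists>d>0. \<forall>x'\<in>sphere 0 1. dist x' x < d \<longrightarrow> dist (N x') (N x) < \<epsilon>"
    proof (intro exI[of _ "\<epsilon> / (M + 1)"] conjI ballI impI)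
      show "\<epsilon> / (M + 1) > 0" using \<open>\<epsilon> > 0\<close> M by simp
      fix x' assume "dist x' x < \<epsilon> / (M + 1)"
      then have "(M+1) * norm (x' - x) < \<epsilon>" using M by (simp add: dist_norm field_simps)
      moreover have "M * norm (x' - x) \<le> (M+1) * norm (x' - x)" by (simp add: distrib_right)
      ultimately show "dist (N x') (N x) < \<epsilon>" using lip[of x' x] by (simp add: dist_real_def)
    qed
  qed
  obtain b :: 'a where b: "b \<in> Basis" using nonempty_Basis by blast
  have ne: "sphere (0::'a) 1 \<noteq> {}" using b by (intro notI) (metis empty_iff mem_sphere_0 norm_Basis)
  obtain x0 where x0: "x0 \<in> sphere 0 1" "\<And>y. y \<in> sphere 0 1 \<Longrightarrow> N x0 \<le> N y"
    using continuous_attains_inf[OF compact_sphere ne cont] by blast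
  have "x0 \<noteq> 0" using x0(1) by auto
  then have pos: "N x0 > 0" using assms nrm_basic(3)[OF assms, of x0] unfolding is_norm_def
    by (metis order_le_less)
  have "norm x \<le> (1 / N x0) * N x" for x
  proof (cases "x = 0")
    case True then show ?thesis by (simp add: nrm_basic[OF assms])
  next
    case False
    then have "(1 / norm x) *\<^sub>R x \<in> sphere 0 1" by simp
    then have "N x0 \<le> N ((1 / norm x) *\<^sub>R x)" by (rule x0(2))
    also have "\<dots> = N x / norm x" by (simp add: nrm_basic[OF assms])
    finally have "N x0 * norm x \<le> N x" using False by (simp add: field_simps)
    then show ?thesis using pos by (simp add: field_simps)
  qed
  then show ?thesis using pos by (intro exI[of _ "1 / N x0"]) auto
qed


lemma K_add:
  assumes "regular_closed_convex_cone K" "x \<in> K" "y \<in> K"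
  shows "x + y \<in> K"
proof -
  have cv: "convex K" and cn: "cone K" using assms(1) unfolding regular_closed_convex_cone_def by auto
  have "(1/2) *\<^sub>R x + (1/2) *\<^sub>R y \<in> K" using cv assms(2,3) unfolding convex_def by auto
  then have "2 *\<^sub>R ((1/2) *\<^sub>R x + (1/2) *\<^sub>R y) \<in> K" using cn unfolding cone_def by auto
  then show ?thesis by (simp add: scaleR_add_right)
qed

lemma K_zero:
  assumes "regular_closed_convex_cone K"
  shows "0 \<in> K"
  using assms unfolding regular_closed_convex_cone_def by auto

lemma K_scale:
  assumes "regular_closed_convex_cone K" "x \<in> K" "c \<ge> 0"
  shows "c *\<^sub>R x \<in> K"
  using assms unfolding regular_closed_convex_cone_def cone_def by auto

lemma K_pointed:
  assumes "regular_closed_convex_cone K" "x \<in> K" "-x \<in> K"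
  shows "x = 0"
proof -
  have "x \<in> K \<inter> uminus ` K" using assms(2,3) by (metis IntI image_eqI minus_minus)
  then show ?thesis using assms(1) unfolding regular_closed_convex_cone_def by auto
qed

lemma e_ball:
  assumes "e \<in> interior K"
  obtains r where "r > 0" "ball e r \<subseteq> K"
  using assms mem_interior by blast

lemma dual_pos:
  fixes K :: "'a::euclidean_space set"
  assumes "e \<in> interior K"
  obtains d where "d > 0" "\<And>a. a \<in> dual_cone K \<Longrightarrow> a \<bullet> e \<ge> d * norm a"
proof -
  obtain r where r: "r > 0" "ball e r \<subseteq> K" using e_ball[OF assms] by blast
  have "a \<bullet> e \<ge> (r/2) * norm a" if a: "a \<in> dual_cone K" for a
  proof (cases "a = 0")
    case True then show ?thesis by simp
  next
    case False
    define z where "z = e - (r/2 / norm a) *\<^sub>R a"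
    have "dist e z = r/2" using False r by (simp add: z_def dist_norm)
    then have "z \<in> K" using r by auto
    then have "a \<bullet> z \<ge> 0" using a unfolding dual_cone_def by auto
    moreover have "a \<bullet> z = a \<bullet> e - (r/2) * norm a"
      using False by (simp add: z_def inner_diff_right power2_norm_eq_inner[symmetric] power2_eq_square)
    ultimately show ?thesis by simp
  qed
  then show ?thesis using that[of "r/2"] r by auto
qed

lemma sep_cone:
  fixes K :: "'a::euclidean_space set"
  assumes "regular_closed_convex_cone K" "z \<notin> K"
  shows "\<exists>a\<in>dual_cone K. a \<bullet> z < 0"
proof -
  have "convex K" "closed K" using assms(1) unfolding regular_closed_convex_cone_def by auto
  then obtain a b where ab: "a \<bullet> z < b" "\<forall>x\<in>K. a \<bullet> x > b"
    using separating_hyperplane_closed_point[OF _ _ assms(2)] by blast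
  have "b < 0" using ab(2) K_zero[OF assms(1)] by auto
  have "a \<bullet> x \<ge> 0" if "x \<in> K" for x
  proof (rule ccontr)
    assume "\<not> 0 \<le> a \<bullet> x"
    then have neg: "a \<bullet> x < 0" by simp
    have "(b / (a \<bullet> x)) *\<^sub>R x \<in> K" using K_scale[OF assms(1) that, of "b / (a \<bullet> x)"] neg \<open>b<0\<close>
      by (simp add: divide_nonpos_neg)
    then have "a \<bullet> ((b / (a \<bullet> x)) *\<^sub>R x) > b" using ab(2) by blast
    then show False using neg by simp
  qed
  then have "a \<in> dual_cone K" unfolding dual_cone_def by auto
  then show ?thesis using ab \<open>b < 0\<close> by force
qed

lemma int_shift:
  fixes K :: "'a::euclidean_space set"
  assumes "regular_closed_convex_cone K" "e \<in> interior K" "k \<in> K" "t > 0"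
  shows "k + t *\<^sub>R e \<in> interior K"
proof -
  obtain r where r: "r > 0" "ball e r \<subseteq> K" using e_ball[OF assms(2)] by blast
  have "ball (k + t *\<^sub>R e) (t * r) \<subseteq> K"
  proof
    fix z assume z: "z \<in> ball (k + t *\<^sub>R e) (t * r)"
    define w where "w = e + (1/t) *\<^sub>R (z - k - t *\<^sub>R e)"
    have "dist e w = (1/t) * norm (z - k - t *\<^sub>R e)" using assms(4) by (simp add: w_def dist_norm)
    also have "\<dots> < (1/t) * (t * r)" using z assms(4)
      by (intro mult_strict_left_mono) (auto simp: dist_norm norm_minus_commute algebra_simps)
    also have "\<dots> = r" using assms(4) by simp
    finally have "w \<in> K" using r by auto
    then have "t *\<^sub>R w \<in> K" using K_scale[OF assms(1)] assms(4) by auto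
    then have "k + t *\<^sub>R w \<in> K" using K_add[OF assms(1) assms(3)] by auto
    moreover have "k + t *\<^sub>R w = z" using assms(4) by (simp add: w_def algebra_simps)
    ultimately show "z \<in> K" by simp
  qed
  then show ?thesis using mem_interior r assms(4) by (metis mult_pos_pos)
qed

lemma e_nonzero:
  fixes K :: "'a::euclidean_space set"
  assumes "regular_closed_convex_cone K" "e \<in> interior K"
  shows "e \<noteq> 0"
proof
  assume "e = 0"
  obtain r where r: "r > 0" "ball e r \<subseteq> K" using e_ball[OF assms(2)] by blast
  obtain b :: 'a where b: "b \<in> Basis" using nonempty_Basis by blast
  have "(r/2) *\<^sub>R b \<in> K" "- ((r/2) *\<^sub>R b) \<in> K" using r b \<open>e = 0\<close> by (auto simp: subset_iff)
  then have "(r/2) *\<^sub>R b = 0" using K_pointed[OF assms(1)] by blast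
  then show False using r b by (auto simp: nonzero_Basis)
qed

lemma Delta_ne:
  fixes K :: "'a::euclidean_space set"
  assumes "regular_closed_convex_cone K" "e \<in> interior K"
  shows "simplex_dual K e \<noteq> {}"
proof -
  obtain b :: 'a where b: "b \<in> Basis" using nonempty_Basis by blast
  have "\<exists>z. z \<notin> K"
  proof (rule ccontr)
    assume "\<not> ?thesis"
    then have "b \<in> K" "-b \<in> K" by auto
    then have "b = 0" using K_pointed[OF assms(1)] by blast
    then show False using b nonzero_Basis by blast
  qed
  then obtain z where "z \<notin> K" by blast
  then obtain a where a: "a \<in> dual_cone K" "a \<bullet> z < 0" using sep_cone[OF assms(1)] by blast
  obtain d where d: "d > 0" "\<And>a. a \<in> dual_cone K \<Longrightarrow> a \<bullet> e \<ge> d * norm a" using dual_pos[OF assms(2)] by blast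
  have "a \<noteq> 0" using a by auto
  then have pos: "a \<bullet> e > 0" using d(2)[OF a(1)] d(1) by (smt (verit) mult_pos_pos zero_less_norm_iff)
  have "(1 / (a \<bullet> e)) *\<^sub>R a \<in> simplex_dual K e"
    using a(1) pos unfolding simplex_dual_def dual_cone_def by auto
  then show ?thesis by blast
qed


lemma Delta_bdd:
  fixes K :: "'a::euclidean_space set"
  assumes "e \<in> interior K"
  obtains R where "R > 0" "\<And>u. u \<in> simplex_dual K e \<Longrightarrow> norm u \<le> R"
proof -
  obtain d where d: "d > 0" "\<And>a. a \<in> dual_cone K \<Longrightarrow> a \<bullet> e \<ge> d * norm a" using dual_pos[OF assms] by blast
  have "norm u \<le> 1/d" if "u \<in> simplex_dual K e" for u
    using d(2)[of u] that d(1) unfolding simplex_dual_def by (auto simp: field_simps)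
  then show ?thesis using that[of "1/d"] d(1) by auto
qed

lemma I_bdd:
  fixes K :: "'a::euclidean_space set"
  assumes "e \<in> interior K"
  shows "bdd_below ((\<lambda>u. x \<bullet> u) ` simplex_dual K e)" "bdd_above ((\<lambda>u. x \<bullet> u) ` simplex_dual K e)"
proof -
  obtain R where R: "R > 0" "\<And>u. u \<in> simplex_dual K e \<Longrightarrow> norm u \<le> R" using Delta_bdd[OF assms] by blast
  have *: "\<bar>x \<bullet> u\<bar> \<le> norm x * R" if "u \<in> simplex_dual K e" for u
    using Cauchy_Schwarz_ineq2[of x u] R(2)[OF that] by (meson dual_order.trans mult_left_mono norm_ge_zero)
  then show "bdd_below ((\<lambda>u. x \<bullet> u) ` simplex_dual K e)"
    unfolding bdd_below_def by (auto simp: abs_le_iff intro!: exI[of _ "- (norm x * R)"]) (smt (verit))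
  show "bdd_above ((\<lambda>u. x \<bullet> u) ` simplex_dual K e)"
    using * unfolding bdd_above_def by (auto simp: abs_le_iff intro!: exI[of _ "norm x * R"])
qed

lemma lam_char:
  fixes K :: "'a::euclidean_space set"
  assumes "regular_closed_convex_cone K" "e \<in> interior K"
  shows "x - t *\<^sub>R e \<in> K \<longleftrightarrow> t \<le> (INF u\<in>simplex_dual K e. x \<bullet> u)"
proof
  assume h: "x - t *\<^sub>R e \<in> K"
  show "t \<le> (INF u\<in>simplex_dual K e. x \<bullet> u)"
  proof (rule cINF_greatest[OF Delta_ne[OF assms]])
    fix u assume u: "u \<in> simplex_dual K e"
    then have "u \<bullet> (x - t *\<^sub>R e) \<ge> 0" "u \<bullet> e = 1" using h unfolding simplex_dual_def dual_cone_def by auto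
    then show "t \<le> x \<bullet> u" by (simp add: inner_diff_right inner_commute)
  qed
next
  assume h: "t \<le> (INF u\<in>simplex_dual K e. x \<bullet> u)"
  show "x - t *\<^sub>R e \<in> K"
  proof (rule ccontr)
    assume "x - t *\<^sub>R e \<notin> K"
    then obtain a where a: "a \<in> dual_cone K" "a \<bullet> (x - t *\<^sub>R e) < 0" using sep_cone[OF assms(1)] by blast
    obtain d where d: "d > 0" "\<And>a. a \<in> dual_cone K \<Longrightarrow> a \<bullet> e \<ge> d * norm a" using dual_pos[OF assms(2)] by blast
    have "a \<noteq> 0" using a by auto
    then have pos: "a \<bullet> e > 0" using d(2)[OF a(1)] d(1) by (smt (verit) mult_pos_pos zero_less_norm_iff)
    define u where "u = (1 / (a \<bullet> e)) *\<^sub>R a"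
    have u: "u \<in> simplex_dual K e"
      using a(1) pos unfolding simplex_dual_def dual_cone_def u_def by auto
    have "a \<bullet> x < t * (a \<bullet> e)" using a(2) by (simp add: inner_diff_right)
    then have "x \<bullet> u < t" using pos by (simp add: u_def inner_commute field_simps)
    moreover have "(INF u\<in>simplex_dual K e. x \<bullet> u) \<le> x \<bullet> u"
      by (rule cINF_lower[OF I_bdd(1)[OF assms(2)] u])
    ultimately show False using h by simp
  qed
qed

lemma lam_eq:
  fixes K :: "'a::euclidean_space set"
  assumes "regular_closed_convex_cone K" "e \<in> interior K"
  shows "lambda_e K e x = (INF u\<in>simplex_dual K e. x \<bullet> u)"
proof -
  have "{t. x - t *\<^sub>R e \<in> K} = {..(INF u\<in>simplex_dual K e. x \<bullet> u)}"
    using lam_char[OF assms] by auto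
  then show ?thesis unfolding lambda_e_def by simp
qed


lemma norm_e_eq:
  fixes K :: "'a::euclidean_space set"
  assumes "regular_closed_convex_cone K" "e \<in> interior K"
  shows "norm_e K e x = max 0 (max (- (INF u\<in>simplex_dual K e. x \<bullet> u)) (- (INF u\<in>simplex_dual K e. (-x) \<bullet> u)))"
proof -
  have a: "x + a *\<^sub>R e \<in> K \<longleftrightarrow> -a \<le> (INF u\<in>simplex_dual K e. x \<bullet> u)" for a
    using lam_char[OF assms, of x "-a"] by simp
  have b: "-x + a *\<^sub>R e \<in> K \<longleftrightarrow> -a \<le> (INF u\<in>simplex_dual K e. (-x) \<bullet> u)" for a
    using lam_char[OF assms, of "-x" "-a"] by simp
  have "{\<alpha>. \<alpha> \<ge> 0 \<and> x + \<alpha> *\<^sub>R e \<in> K \<and> - x + \<alpha> *\<^sub>R e \<in> K}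
     = {max 0 (max (- (INF u\<in>simplex_dual K e. x \<bullet> u)) (- (INF u\<in>simplex_dual K e. (-x) \<bullet> u)))..}"
    unfolding a b by auto
  then show ?thesis unfolding norm_e_def by simp
qed

lemma dual_norm_e:
  fixes K :: "'a::euclidean_space set"
  assumes "regular_closed_convex_cone K" "e \<in> interior K" "u \<in> dual_cone K"
  shows "dual_norm (norm_e K e) u = u \<bullet> e"
proof -
  have ne: "simplex_dual K e \<noteq> {}" by (rule Delta_ne[OF assms(1,2)])
  have I1: "(INF v\<in>simplex_dual K e. e \<bullet> v) = 1"
  proof -
    have "(INF v\<in>simplex_dual K e. e \<bullet> v) = (INF v\<in>simplex_dual K e. 1)"
      by (rule INF_cong) (auto simp: simplex_dual_def inner_commute)
    then show ?thesis using ne by simp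
  qed
  have I2: "(INF v\<in>simplex_dual K e. (-e) \<bullet> v) = -1"
  proof -
    have "(INF v\<in>simplex_dual K e. (-e) \<bullet> v) = (INF v\<in>simplex_dual K e. -1)"
      by (rule INF_cong) (auto simp: simplex_dual_def inner_commute)
    then show ?thesis using ne by simp
  qed
  have ee: "norm_e K e e = 1" unfolding norm_e_eq[OF assms(1,2)] I1 I2 by simp
  have le: "u \<bullet> x \<le> u \<bullet> e" if "norm_e K e x = 1" for x
  proof -
    have "- (INF v\<in>simplex_dual K e. (-x) \<bullet> v) \<le> 1" using that unfolding norm_e_eq[OF assms(1,2)] by linarith
    then have "-x + 1 *\<^sub>R e \<in> K" using lam_char[OF assms(1,2), of "-x" "-1"] by simp
    then have "u \<bullet> (e - x) \<ge> 0" using assms(3) unfolding dual_cone_def by auto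
    then show ?thesis by (simp add: inner_diff_right)
  qed
  show ?thesis unfolding dual_norm_def
    by (rule cSup_eq_maximum) (use ee le in auto)
qed


lemma nrm_convex:
  assumes "is_norm N" "0 \<le> a" "0 \<le> b"
  shows "N (a *\<^sub>R x + b *\<^sub>R y) \<le> a * N x + b * N y"
  using nrm_basic(4,5)[OF assms(1)] assms(2,3) by (metis abs_of_nonneg)

lemma convex_B:
  assumes "is_norm N" "subspace L"
  shows "convex {x\<in>L. N x \<le> 1}"
proof (rule convexI)
  fix x y and a b :: real
  assume x: "x \<in> {x\<in>L. N x \<le> 1}" and y: "y \<in> {x\<in>L. N x \<le> 1}" and ab0: "0 \<le> a" "0 \<le> b" "a + b = 1"
  then have ab: "0 \<le> a \<and> 0 \<le> b \<and> a + b = 1" by simp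
  have "a *\<^sub>R x + b *\<^sub>R y \<in> L" using x y assms(2) by (simp add: subspace_add subspace_scale)
  moreover have "N (a *\<^sub>R x + b *\<^sub>R y) \<le> a * N x + b * N y" using nrm_convex[OF assms(1)] ab by blast
  moreover have "a * N x + b * N y \<le> a * 1 + b * 1" using x y ab by (intro add_mono mult_left_mono) auto
  ultimately show "a *\<^sub>R x + b *\<^sub>R y \<in> {x\<in>L. N x \<le> 1}" using ab by auto
qed

lemma sep1:
  fixes K :: "'a::euclidean_space set"
  assumes "regular_closed_convex_cone K" "e \<in> interior K" "is_norm N" "subspace L"
    and hc: "\<And>x. x \<in> {x\<in>L. N x \<le> 1} \<Longrightarrow> (INF u\<in>simplex_dual K e. x \<bullet> u) \<le> c"
  shows "\<exists>u\<in>simplex_dual K e. \<forall>x\<in>{x\<in>L. N x \<le> 1}. x \<bullet> u \<le> c"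
proof -
  define B where "B = {x\<in>L. N x \<le> 1}"
  define S where "S = (\<lambda>b. b - c *\<^sub>R e) ` B"
  have cS: "convex S" unfolding S_def B_def using convex_B[OF assms(3,4)] by simp
  have "0 \<in> B" unfolding B_def using assms(4) nrm_basic(1)[OF assms(3)] by (simp add: subspace_0)
  then have neS: "S \<noteq> {}" unfolding S_def by auto
  have neT: "interior K \<noteq> {}" using assms(2) by auto
  have enz: "e \<noteq> 0" by (rule e_nonzero[OF assms(1,2)])
  have disj: "S \<inter> interior K = {}"
  proof (rule ccontr)
    assume "S \<inter> interior K \<noteq> {}"
    then obtain x where x: "x \<in> B" "x - c *\<^sub>R e \<in> interior K" unfolding S_def by auto
    then obtain r where r: "r > 0" "ball (x - c *\<^sub>R e) r \<subseteq> K" using mem_interior by blast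
    define w where "w = (x - c *\<^sub>R e) - (r / 2 / norm e) *\<^sub>R e"
    have "dist (x - c *\<^sub>R e) w = r / 2" using enz r by (simp add: w_def dist_norm)
    then have "w \<in> K" using r by auto
    moreover have "w = x - (c + r / 2 / norm e) *\<^sub>R e" by (simp add: w_def algebra_simps)
    ultimately have "c + r / 2 / norm e \<le> (INF u\<in>simplex_dual K e. x \<bullet> u)"
      using lam_char[OF assms(1,2)] by metis
    moreover have "(INF u\<in>simplex_dual K e. x \<bullet> u) \<le> c" using hc x(1) unfolding B_def by blast
    moreover have "r / 2 / norm e > 0" using r enz by simp
    ultimately show False by linarith
  qed
  obtain a b where ab: "a \<noteq> 0" "\<forall>x\<in>S. a \<bullet> x \<le> b" "\<forall>x\<in>interior K. b \<le> a \<bullet> x"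
    using separating_hyperplane_sets[OF cS convex_interior[OF _] neS neT disj]
      assms(1) unfolding regular_closed_convex_cone_def by blast
  have shift: "b \<le> a \<bullet> k + t * (a \<bullet> e)" if "k \<in> K" "t > 0" for k t
  proof -
    have "b \<le> a \<bullet> (k + t *\<^sub>R e)" using ab(3) int_shift[OF assms(1,2) that] by blast
    then show ?thesis by (simp add: inner_add_right)
  qed
  have b0: "b \<le> 0"
  proof (rule ccontr)
    assume "\<not> b \<le> 0"
    define t where "t = b / (2 * (\<bar>a \<bullet> e\<bar> + 1))"
    have t: "t > 0" using \<open>\<not> b \<le> 0\<close> by (simp add: t_def)
    have "t * (a \<bullet> e) \<le> t * \<bar>a \<bullet> e\<bar>" using t by (simp add: mult_left_mono)
    also have "\<dots> < b" using \<open>\<not> b \<le> 0\<close> by (simp add: t_def field_simps add_pos_nonneg)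
    finally show False using shift[OF K_zero[OF assms(1)] t] by simp
  qed
  have aK: "a \<in> dual_cone K" unfolding dual_cone_def
  proof (clarify, rule ccontr)
    fix k assume k: "k \<in> K" "\<not> 0 \<le> a \<bullet> k"
    define s where "s = (\<bar>b\<bar> + \<bar>a \<bullet> e\<bar> + 1) / (- (a \<bullet> k))"
    have s: "s \<ge> 0" unfolding s_def by (rule divide_nonneg_pos) (use k in auto)
    have "b \<le> a \<bullet> (s *\<^sub>R k) + 1 * (a \<bullet> e)" by (rule shift[OF K_scale[OF assms(1) k(1) s]]) simp
    also have "a \<bullet> (s *\<^sub>R k) = - (\<bar>b\<bar> + \<bar>a \<bullet> e\<bar> + 1)" using k by (simp add: s_def)
    finally show False by linarith
  qed
  obtain d where d: "d > 0" "\<And>a. a \<in> dual_cone K \<Longrightarrow> a \<bullet> e \<ge> d * norm a" using dual_pos[OF assms(2)] by blast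
  have pos: "a \<bullet> e > 0" using d(2)[OF aK] d(1) ab(1) by (smt (verit) mult_pos_pos zero_less_norm_iff)
  define u where "u = (1 / (a \<bullet> e)) *\<^sub>R a"
  have u: "u \<in> simplex_dual K e"
    using aK pos unfolding simplex_dual_def dual_cone_def u_def by auto
  have "x \<bullet> u \<le> c" if "x \<in> B" for x
  proof -
    have "a \<bullet> (x - c *\<^sub>R e) \<le> b" using ab(2) that unfolding S_def by auto
    then have "a \<bullet> x \<le> c * (a \<bullet> e)" using b0 by (simp add: inner_diff_right)
    then show ?thesis using pos by (simp add: u_def inner_commute field_simps)
  qed
  then show ?thesis using u unfolding B_def by blast
qed


lemma sep2:
  fixes N :: "'a::euclidean_space \<Rightarrow> real"
  assumes nN: "is_norm N" and sL: "subspace L" and c: "c \<ge> 0" and hf: "\<And>x. x \<in> L \<Longrightarrow> u \<bullet> x \<le> c * N x"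
  shows "\<exists>y\<in>orthogonal_comp L. \<forall>z. N z = 1 \<longrightarrow> (y - u) \<bullet> z \<le> c"
proof -
  define G :: "('a \<times> real) set" where "G = {p. snd p > c * N (fst p)}"
  define H :: "('a \<times> real) set" where "H = (\<lambda>x. (x, u \<bullet> x)) ` L"
  have cG: "convex G"
  proof (rule convexI)
    fix p q :: "'a \<times> real" and a b :: real
    assume p: "p \<in> G" and q: "q \<in> G" and ab: "0 \<le> a" "0 \<le> b" "a + b = 1"
    obtain z1 t1 where p': "p = (z1, t1)" by (cases p)
    obtain z2 t2 where q': "q = (z2, t2)" by (cases q)
    have h1: "t1 > c * N z1" and h2: "t2 > c * N z2" using p q p' q' by (auto simp: G_def)
    define m where "m = min (t1 - c * N z1) (t2 - c * N z2)"
    have m: "m > 0" using h1 h2 by (simp add: m_def)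
    have "c * N (a *\<^sub>R z1 + b *\<^sub>R z2) \<le> c * (a * N z1 + b * N z2)"
      using nrm_convex[OF nN ab(1,2)] c by (intro mult_left_mono) auto
    moreover have "a * (t1 - c * N z1) + b * (t2 - c * N z2) \<ge> a * m + b * m"
      using ab by (intro add_mono mult_left_mono) (auto simp: m_def)
    moreover have "a * m + b * m = m" using ab by (simp add: distrib_right[symmetric])
    ultimately have "c * N (a *\<^sub>R z1 + b *\<^sub>R z2) < a * t1 + b * t2" using m
      by (simp add: algebra_simps)
    then show "a *\<^sub>R p + b *\<^sub>R q \<in> G" using p' q' by (simp add: G_def)
  qed
  have cH: "convex H"
  proof (rule convexI)
    fix p q :: "'a \<times> real" and a b :: real
    assume p: "p \<in> H" and q: "q \<in> H" and ab: "0 \<le> a" "0 \<le> b" "a + b = 1"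
    obtain x where x: "x \<in> L" "p = (x, u \<bullet> x)" using p by (auto simp: H_def)
    obtain y where y: "y \<in> L" "q = (y, u \<bullet> y)" using q by (auto simp: H_def)
    have "a *\<^sub>R x + b *\<^sub>R y \<in> L" using x y sL by (simp add: subspace_add subspace_scale)
    moreover have "a *\<^sub>R p + b *\<^sub>R q = (a *\<^sub>R x + b *\<^sub>R y, u \<bullet> (a *\<^sub>R x + b *\<^sub>R y))"
      using x y by (simp add: inner_add_right)
    ultimately show "a *\<^sub>R p + b *\<^sub>R q \<in> H" unfolding H_def by blast
  qed
  have "(0, 1) \<in> G" using nrm_basic(1)[OF nN] by (simp add: G_def)
  then have neG: "G \<noteq> {}" by blast
  have neH: "H \<noteq> {}" using subspace_0[OF sL] by (auto simp: H_def)
  have disj: "G \<inter> H = {}" using hf by (auto simp: G_def H_def) (meson not_less)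
  obtain p b where pb: "p \<noteq> 0" "\<forall>x\<in>G. p \<bullet> x \<le> b" "\<forall>x\<in>H. b \<le> p \<bullet> x"
    using separating_hyperplane_sets[OF cG cH neG neH disj] by blast
  obtain a \<beta> where p': "p = (a, \<beta>)" by (cases p)
  have hH: "b \<le> a \<bullet> x + \<beta> * (u \<bullet> x)" if "x \<in> L" for x
    using pb(3) that p' by (auto simp: H_def)
  have b0: "b \<le> 0" using hH[of 0] sL by (simp add: subspace_0)
  have lin0: "a \<bullet> x + \<beta> * (u \<bullet> x) = 0" if x: "x \<in> L" for x
  proof (rule ccontr)
    define q where "q = a \<bullet> x + \<beta> * (u \<bullet> x)"
    assume "\<not> ?thesis"
    then have q0: "q \<noteq> 0" by (simp add: q_def)
    have "((b - 1) / q) *\<^sub>R x \<in> L" using x sL by (simp add: subspace_scale)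
    then have "b \<le> a \<bullet> (((b - 1) / q) *\<^sub>R x) + \<beta> * (u \<bullet> (((b - 1) / q) *\<^sub>R x))" by (rule hH)
    also have "\<dots> = ((b - 1) / q) * q"
    proof -
      have "\<And>s. a \<bullet> (s *\<^sub>R x) + \<beta> * (u \<bullet> (s *\<^sub>R x)) = s * q" by (simp add: q_def algebra_simps)
      then show ?thesis by blast
    qed
    also have "\<dots> = b - 1" using q0 by simp
    finally show False by simp
  qed
  have hG: "a \<bullet> z + \<beta> * t \<le> 0" if "t > c * N z" for z t
    using pb(2) that p' b0 by (force simp: G_def)
  have "\<beta> \<le> 0" using hG[of 0 1] nrm_basic(1)[OF nN] by simp
  moreover have "\<beta> \<noteq> 0"
  proof
    assume "\<beta> = 0"
    then have "a \<bullet> a \<le> 0" using hG[of a "c * N a + 1"] by simp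
    then have "a = 0" by (metis inner_gt_zero_iff not_le)
    then show False using pb(1) p' \<open>\<beta> = 0\<close> by (simp add: zero_prod_def)
  qed
  ultimately have bneg: "\<beta> < 0" by simp
  define w where "w = (1 / (- \<beta>)) *\<^sub>R a"
  have wL: "w \<bullet> x = u \<bullet> x" if "x \<in> L" for x
    using lin0[OF that] bneg by (simp add: w_def field_simps)
  have wG: "w \<bullet> v \<le> c * N v" for v
  proof (rule ccontr)
    assume nt: "\<not> ?thesis"
    define t where "t = (w \<bullet> v + c * N v) / 2"
    have "t > c * N v" using nt by (simp add: t_def)
    then have "a \<bullet> v + \<beta> * t \<le> 0" by (rule hG)
    moreover have "a \<bullet> v = (- \<beta>) * (w \<bullet> v)" using bneg by (simp add: w_def)
    ultimately have "w \<bullet> v \<le> t" using bneg by (simp add: algebra_simps)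
    then show False using nt by (simp add: t_def)
  qed
  define y where "y = u - w"
  have "y \<in> orthogonal_comp L"
    unfolding orthogonal_comp_def orthogonal_def y_def
    using wL by (auto simp: inner_diff_right inner_commute)
  moreover have "(y - u) \<bullet> z \<le> c" if "N z = 1" for z
  proof -
    have "w \<bullet> (-z) \<le> c * N (-z)" by (rule wG)
    then show ?thesis using that nrm_basic(2)[OF nN, of z] by (simp add: y_def)
  qed
  ultimately show ?thesis by blast
qed


theorem mainTheorem7:
  fixes K :: "'a::euclidean_space set" and e :: 'a and N :: "'a \<Rightarrow> real"
    and L :: "'a set" and m :: nat
  assumes "regular_closed_convex_cone K"
    and "e \<in> interior K"
    and "is_norm N"
    and "1 \<le> m" and "m < DIM('a)"
    and "subspace L" and "dim L = m"
  shows "nu N (norm_e K e) K L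
           = (INF u\<in>simplex_dual K e. SUP x\<in>{x\<in>L. N x \<le> 1}. x \<bullet> u)
         \<and> (INF u\<in>simplex_dual K e. SUP x\<in>{x\<in>L. N x \<le> 1}. x \<bullet> u)
           = (SUP x\<in>{x\<in>L. N x \<le> 1}. INF u\<in>simplex_dual K e. x \<bullet> u)
         \<and> (SUP x\<in>{x\<in>L. N x \<le> 1}. INF u\<in>simplex_dual K e. x \<bullet> u)
           = (SUP x\<in>{x\<in>L. N x \<le> 1}. lambda_e K e x)"
proof -
  note K = assms(1,2)
  note nN = assms(3)
  note sL = assms(6)
  define B where "B = {x\<in>L. N x \<le> 1}"
  define D where "D = simplex_dual K e"
  define I where "I = (\<lambda>x. INF u\<in>D. x \<bullet> u)"
  define S where "S = (\<lambda>u. SUP x\<in>B. x \<bullet> u)"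
  define A where "A = (INF u\<in>D. S u)"
  define C where "C = (SUP x\<in>B. I x)"
  obtain R where R: "R > 0" "\<And>x. norm x \<le> R * N x" using nrm_lower[OF nN] by blast
  have nB: "norm x \<le> R" if "x \<in> B" for x
  proof -
    have "R * N x \<le> R * 1" using that R(1) unfolding B_def by (intro mult_left_mono) auto
    then show ?thesis using R(2)[of x] by simp
  qed
  have B0: "0 \<in> B" unfolding B_def using subspace_0[OF sL] nrm_basic(1)[OF nN] by simp
  then have Bne: "B \<noteq> {}" by blast
  have Dne: "D \<noteq> {}" unfolding D_def by (rule Delta_ne[OF K])
  then obtain u0 where u0: "u0 \<in> D" by blast
  have Ibdd: "bdd_below ((\<lambda>u. x \<bullet> u) ` D)" for x unfolding D_def by (rule I_bdd(1)[OF assms(2)])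
  have Ilow: "I x \<le> x \<bullet> u" if "u \<in> D" for x u
    unfolding I_def by (rule cINF_lower[OF Ibdd that])
  have inner_le: "x \<bullet> v \<le> norm v * R" if "x \<in> B" for x v
  proof -
    have "x \<bullet> v \<le> norm x * norm v" by (metis Cauchy_Schwarz_ineq2 abs_le_iff)
    also have "\<dots> \<le> R * norm v" using nB[OF that] by (simp add: mult_right_mono)
    finally show ?thesis by (simp add: mult.commute)
  qed
  have Sbdd: "bdd_above ((\<lambda>x. x \<bullet> u) ` B)" for u
    using inner_le by (auto simp: bdd_above_def)
  have Supper: "x \<bullet> u \<le> S u" if "x \<in> B" for x u
    unfolding S_def by (rule cSUP_upper[OF that Sbdd])
  have S0: "0 \<le> S u" for u using Supper[OF B0, of u] by simp
  have SDbdd: "bdd_below (S ` D)" using S0 by (auto simp: bdd_below_def)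
  have IBbdd: "bdd_above (I ` B)"
    by (rule bdd_aboveI2[where M = "norm u0 * R"]) (use Ilow[OF u0] inner_le[of _ u0] order_trans in blast)
  have Cupper: "I x \<le> C" if "x \<in> B" for x unfolding C_def by (rule cSUP_upper[OF that IBbdd])
  have I0: "I 0 = 0" unfolding I_def using Dne by simp
  have C0: "0 \<le> C" using Cupper[OF B0] I0 by simp
  obtain bb :: 'a where bb: "bb \<in> Basis" using nonempty_Basis by blast
  have "bb \<noteq> 0" using bb nonzero_Basis by blast
  then have Nbb: "N bb > 0" using nN nrm_basic(3)[OF nN, of bb] unfolding is_norm_def by (metis order_le_less)
  define x0 where "x0 = (1 / N bb) *\<^sub>R bb"
  have x0: "N x0 = 1" using Nbb by (simp add: x0_def nrm_basic[OF nN])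
  have dnbdd: "bdd_above {v \<bullet> x | x. N x = 1}" for v
  proof -
    have "v \<bullet> x \<le> norm v * R" if "N x = 1" for x
      using inner_le[of x v] R(2)[of x] that
    proof -
      have "v \<bullet> x \<le> norm v * norm x" by (metis Cauchy_Schwarz_ineq2 abs_le_iff)
      also have "\<dots> \<le> norm v * (R * N x)" by (rule mult_left_mono[OF R(2)]) simp
      finally show ?thesis using that by simp
    qed
    then show ?thesis by (auto simp: bdd_above_def)
  qed
  have dn_upper: "v \<bullet> x \<le> dual_norm N v" if "N x = 1" for v x
    unfolding dual_norm_def by (rule cSup_upper[OF _ dnbdd]) (use that in blast)
  have dn_nonneg: "0 \<le> dual_norm N v" for v
  proof -
    have "N (-x0) = 1" using x0 nrm_basic(2)[OF nN] by simp
    then show ?thesis using dn_upper[OF x0, of v] dn_upper[of "-x0" v] by simp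
  qed
  have dn_least: "dual_norm N v \<le> c" if "\<And>x. N x = 1 \<Longrightarrow> v \<bullet> x \<le> c" for v c
    unfolding dual_norm_def by (rule cSup_least) (use x0 that in auto)
  define NS where "NS = {dual_norm N (y - u) | u y.
      u \<in> dual_cone K \<and> y \<in> orthogonal_comp L \<and> dual_norm (norm_e K e) u = 1}"
  have nu_eq: "nu N (norm_e K e) K L = Inf NS" unfolding nu_def NS_def by simp
  have NSchar: "\<exists>u y. u \<in> D \<and> y \<in> orthogonal_comp L \<and> z = dual_norm N (y - u)" if "z \<in> NS" for z
    using that dual_norm_e[OF K] unfolding NS_def D_def simplex_dual_def by auto
  have NSbdd: "bdd_below NS" using dn_nonneg unfolding NS_def bdd_below_def by auto
  have CA: "C \<le> A"
    unfolding C_def A_def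
  proof (rule cSUP_least[OF Bne])
    fix x assume x: "x \<in> B"
    show "I x \<le> (INF u\<in>D. S u)"
      by (rule cINF_greatest[OF Dne]) (use Ilow Supper[OF x] order_trans in blast)
  qed
  have SleN: "S u \<le> dual_norm N (y - u)" if y: "y \<in> orthogonal_comp L" for u y
    unfolding S_def
  proof (rule cSUP_least[OF Bne])
    fix x assume x: "x \<in> B"
    have xy: "x \<bullet> y = 0" using y x unfolding orthogonal_comp_def orthogonal_def B_def by auto
    show "x \<bullet> u \<le> dual_norm N (y - u)"
    proof (cases "x = 0")
      case True then show ?thesis using dn_nonneg by simp
    next
      case False
      then have Nx: "N x > 0" using nN nrm_basic(3)[OF nN, of x] unfolding is_norm_def by (metis order_le_less)
      define x' where "x' = - ((1 / N x) *\<^sub>R x)"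
      have "N x' = 1" using Nx by (simp add: x'_def nrm_basic[OF nN])
      then have "(y - u) \<bullet> x' \<le> dual_norm N (y - u)" by (rule dn_upper)
      moreover have "(y - u) \<bullet> x' = (x \<bullet> u) / N x"
      proof -
        have "(y - u) \<bullet> x = - (x \<bullet> u)" using xy by (simp add: inner_diff_left inner_commute[of y x] inner_commute[of u x])
        then show ?thesis by (simp add: x'_def)
      qed
      ultimately have "x \<bullet> u \<le> N x * dual_norm N (y - u)" using Nx by (simp add: field_simps)
      also have "\<dots> \<le> 1 * dual_norm N (y - u)" using x dn_nonneg unfolding B_def by (intro mult_right_mono) auto
      finally show ?thesis by simp
    qed
  qed
  have AN: "A \<le> Inf NS"
  proof (rule cInf_greatest)
    show "NS \<noteq> {}"
    proof -
      have "u0 \<in> dual_cone K" "dual_norm (norm_e K e) u0 = 1"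
        using u0 dual_norm_e[OF K] unfolding D_def simplex_dual_def by auto
      moreover have "0 \<in> orthogonal_comp L" by (simp add: orthogonal_comp_def orthogonal_def)
      ultimately show ?thesis unfolding NS_def by blast
    qed
  next
    fix z assume "z \<in> NS"
    then obtain u y where uy: "u \<in> D" "y \<in> orthogonal_comp L" "z = dual_norm N (y - u)" using NSchar by blast
    have "A \<le> S u" unfolding A_def by (rule cINF_lower[OF SDbdd uy(1)])
    also have "\<dots> \<le> z" using SleN[OF uy(2)] uy(3) by simp
    finally show "A \<le> z" .
  qed
  have NC: "Inf NS \<le> C"
  proof -
    have "\<exists>u\<in>simplex_dual K e. \<forall>x\<in>{x\<in>L. N x \<le> 1}. x \<bullet> u \<le> C"
      by (rule sep1[OF K nN sL]) (use Cupper in \<open>auto simp: B_def I_def D_def\<close>)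
    then obtain u where u: "u \<in> D" "\<And>x. x \<in> B \<Longrightarrow> x \<bullet> u \<le> C" unfolding B_def D_def by blast
    have hf: "u \<bullet> x \<le> C * N x" if "x \<in> L" for x
    proof (cases "x = 0")
      case True then show ?thesis using nrm_basic(1)[OF nN] by simp
    next
      case False
      then have Nx: "N x > 0" using nN nrm_basic(3)[OF nN, of x] unfolding is_norm_def by (metis order_le_less)
      have "(1 / N x) *\<^sub>R x \<in> B" using Nx that sL unfolding B_def by (simp add: subspace_scale nrm_basic[OF nN])
      then have "((1 / N x) *\<^sub>R x) \<bullet> u \<le> C" by (rule u(2))
      then show ?thesis using Nx by (simp add: inner_commute field_simps)
    qed
    obtain y where y: "y \<in> orthogonal_comp L" "\<And>z. N z = 1 \<Longrightarrow> (y - u) \<bullet> z \<le> C"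
      using sep2[OF nN sL C0 hf] by blast
    have "dual_norm N (y - u) \<le> C" by (rule dn_least) (use y in auto)
    moreover have "dual_norm N (y - u) \<in> NS"
    proof -
      have "u \<in> dual_cone K" "dual_norm (norm_e K e) u = 1"
        using u(1) dual_norm_e[OF K] unfolding D_def simplex_dual_def by auto
      then show ?thesis unfolding NS_def using y(1) by blast
    qed
    ultimately show ?thesis using cInf_lower[OF _ NSbdd] by (meson order_trans)
  qed
  have CL: "C = (SUP x\<in>B. lambda_e K e x)"
    unfolding C_def I_def D_def using lam_eq[OF K] by simp
  have "Inf NS = A" "A = C" using CA AN NC by linarith+
  then show ?thesis using CL nu_eq unfolding A_def S_def C_def I_def B_def D_def by simp
qed

end
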